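(* Assume the monotone likelihood ratio property: for all $\rho,\rho'\in\mathcal{R}$ with $\rho>\rho'$, $\frac{\Pr\{R=\rho\mid Y=1\}}{\Pr\{R=\rho\mid Y=0\}}\ge\frac{\Pr\{R=\rho'\mid Y=1\}}{\Pr\{R=\rho'\mid Y=0\}}$. Let $\epsilon_{\max}\ge0$, $\gamma_{\max}\ge 0$, and let $\epsilon^*$ be the solution of $$\epsilon^*=\arg\max_{0\le\epsilon\le\epsilon_{\max}}\theta(\epsilon)\quad\text{s.t.}\quad|\gamma(\epsilon)|\le\gamma_{\max}.$$ Then $\epsilon^*=\epsilon_{\max}$ if $|\gamma(\epsilon_{\max})|\le\gamma_{\max}$, and otherwise $\epsilon^*=\max\{\epsilon\le\epsilon_{\max}:\ |\gamma(\epsilon)|=\gamma_{\max}\}$.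
   Context: There are $n$ individuals indexed by $\mathcal{N}=\{1,\dots,n\}$. Individual $i$ is described by a random tuple $(X_i,A_i,Y_i)$, with features $X_i\in\mathcal{X}$, protected attribute $A_i\in\{0,1\}$ and qualification state $Y_i\in\{0,1\}$; the tuples are i.i.d. with a common distribution $\mathsf{F}$, and $(X,A,Y)$ is a generic tuple with this distribution. A fixed function $r:\mathcal{X}\to\mathcal{R}$ is given, with $\mathcal{R}\subset[0,1]$ finite; $R_i=r(X_i)$, $R=r(X)$, $\mathbf{D}=(X_1,\dots,X_n)$. For $\epsilon\ge0$, the exponential mechanism $\mathscr{A}_\epsilon$ selects individual $i$ with probability $Z_{i,\epsilon}=\exp(\epsilon R_i/2)/\sum_{j=1}^n\exp(\epsilon R_j/2)$ given the scores; $\mathscr{A}_\epsilon(\mathbf{D})$ denotes the selected index. Its accuracy is $\theta(\epsilon)=\Pr\{Y_{\mathscr{A}_\epsilon(\mathbf{D})}=1\}$ and its fairness gap is $\gamma(\epsilon)=E\{Z_{i,\epsilon}\mid A_i=0,Y_i=1\}-E\{Z_{i,\epsilon}\mid A_i=1,Y_i=1\}$ (conditioning events assumed to have positive probability). *)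

theory Defs
  imports "HOL-Probability.Probability"
begin

text \<open>Individuals are indexed by {1..n}. Individual i has features X i, protected
attribute A i (False = 0, True = 1) and qualification Y i (False = 0, True = 1),
all random variables on the probability space P.\<close>

definition sel_prob ::
  "('x \<Rightarrow> real) \<Rightarrow> (nat \<Rightarrow> 'w \<Rightarrow> 'x) \<Rightarrow> nat \<Rightarrow> real \<Rightarrow> nat \<Rightarrow> 'w \<Rightarrow> real" where
  "sel_prob r X n \<epsilon> i \<omega> =
     exp (\<epsilon> * r (X i \<omega>) / 2) / (\<Sum>j\<in>{1..n}. exp (\<epsilon> * r (X j \<omega>) / 2))"

text \<open>Accuracy: probability that the selected individual is qualified
(the mechanism's internal randomness integrated out).\<close>
definition accuracy ::
  "'w measure \<Rightarrow> ('x \<Rightarrow> real) \<Rightarrow> (nat \<Rightarrow> 'w \<Rightarrow> 'x) \<Rightarrow> (nat \<Rightarrow> 'w \<Rightarrow> bool)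
    \<Rightarrow> nat \<Rightarrow> real \<Rightarrow> real" where
  "accuracy P r X Y n \<epsilon> =
     (\<integral>\<omega>. (\<Sum>i\<in>{1..n}. sel_prob r X n \<epsilon> i \<omega> * (if Y i \<omega> then 1 else 0)) \<partial>P)"

definition cond_exp :: "'w measure \<Rightarrow> ('w \<Rightarrow> real) \<Rightarrow> ('w \<Rightarrow> bool) \<Rightarrow> real" where
  "cond_exp P Z B = (\<integral>\<omega>. Z \<omega> * indicator {\<omega>\<in>space P. B \<omega>} \<omega> \<partial>P)
                     / measure P {\<omega>\<in>space P. B \<omega>}"

text \<open>Fairness gap, computed for individual 1 (the same for every i by exchangeability).\<close>
definition fairness_gap ::
  "'w measure \<Rightarrow> ('x \<Rightarrow> real) \<Rightarrow> (nat \<Rightarrow> 'w \<Rightarrow> 'x) \<Rightarrow> (nat \<Rightarrow> 'w \<Rightarrow> bool)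
    \<Rightarrow> (nat \<Rightarrow> 'w \<Rightarrow> bool) \<Rightarrow> nat \<Rightarrow> real \<Rightarrow> real" where
  "fairness_gap P r X A Y n \<epsilon> =
     cond_exp P (sel_prob r X n \<epsilon> 1) (\<lambda>\<omega>. \<not> A 1 \<omega> \<and> Y 1 \<omega>)
   - cond_exp P (sel_prob r X n \<epsilon> 1) (\<lambda>\<omega>. A 1 \<omega> \<and> Y 1 \<omega>)"

text \<open>Pr{R = rho | Y = b} under the common distribution F of a generic tuple (X,A,Y).\<close>
definition prob_R_given_Y ::
  "('x \<times> bool \<times> bool) measure \<Rightarrow> ('x \<Rightarrow> real) \<Rightarrow> real \<Rightarrow> bool \<Rightarrow> real" where
  "prob_R_given_Y F r \<rho> b =
     measure F {t \<in> space F. r (fst t) = \<rho> \<and> snd (snd t) = b}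
     / measure F {t \<in> space F. snd (snd t) = b}"

end

theory Submission
  imports Defs
begin

lemma finite_integral:
  fixes H :: "'v \<Rightarrow> real"
  assumes "prob_space M" "finite S" "\<And>\<omega>. \<omega> \<in> space M \<Longrightarrow> V \<omega> \<in> S"
    "\<And>v. v \<in> S \<Longrightarrow> {\<omega>\<in>space M. V \<omega> = v} \<in> sets M"
  shows "(\<integral>\<omega>. H (V \<omega>) \<partial>M) = (\<Sum>v\<in>S. H v * measure M {\<omega>\<in>space M. V \<omega> = v})"
proof -
  interpret prob_space M by fact
  have "(\<integral>\<omega>. H (V \<omega>) \<partial>M) = (\<integral>\<omega>. (\<Sum>v\<in>S. H v * indicator {\<omega>\<in>space M. V \<omega> = v} \<omega>) \<partial>M)"
  proof (rule Bochner_Integration.integral_cong)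
    fix \<omega> assume w: "\<omega> \<in> space M"
    have "(\<Sum>v\<in>S. H v * indicator {\<omega>\<in>space M. V \<omega> = v} \<omega>) = (\<Sum>v\<in>S. if V \<omega> = v then H v else 0)"
      using w by (intro sum.cong) (auto simp: indicator_def)
    also have "\<dots> = H (V \<omega>)" using assms(2) assms(3)[OF w] by (simp add: sum.delta[of S "V \<omega>"] eq_commute[of "V \<omega>"])
    finally show "H (V \<omega>) = (\<Sum>v\<in>S. H v * indicator {\<omega>\<in>space M. V \<omega> = v} \<omega>)" by simp
  qed simp
  also have "\<dots> = (\<Sum>v\<in>S. (\<integral>\<omega>. H v * indicator {\<omega>\<in>space M. V \<omega> = v} \<omega> \<partial>M))"
    by (rule Bochner_Integration.integral_sum[where f="\<lambda>v \<omega>. H v * indicator {\<omega>\<in>space M. V \<omega> = v} \<omega>"]) (auto intro!: integrable_mult_right integrable_real_indicator assms(4) simp: emeasure_eq_measure)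
  also have "\<dots> = (\<Sum>v\<in>S. H v * measure M {\<omega>\<in>space M. V \<omega> = v})"
    by (intro sum.cong refl) (simp add: Int_absorb2)
  finally show ?thesis .
qed

lemma cheb:
  fixes a c v :: "'i \<Rightarrow> real"
  assumes "finite I" "I \<noteq> {}" "\<And>i. i \<in> I \<Longrightarrow> a i > 0" "\<And>i. i \<in> I \<Longrightarrow> c i > 0"
    "\<And>i j. i \<in> I \<Longrightarrow> j \<in> I \<Longrightarrow> (c i - c j) * (v i - v j) \<ge> 0"
  shows "(\<Sum>i\<in>I. a i * v i) / (\<Sum>i\<in>I. a i) \<le> (\<Sum>i\<in>I. a i * c i * v i) / (\<Sum>i\<in>I. a i * c i)"
proof -
  have pa: "(\<Sum>i\<in>I. a i) > 0" using assms by (intro sum_pos) auto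
  have pc: "(\<Sum>i\<in>I. a i * c i) > 0" using assms by (intro sum_pos) auto
  define D where "D = (\<Sum>i\<in>I. \<Sum>j\<in>I. a i * a j * v i * (c i - c j))"
  have D1: "D = (\<Sum>i\<in>I. a i * c i * v i) * (\<Sum>i\<in>I. a i) - (\<Sum>i\<in>I. a i * v i) * (\<Sum>i\<in>I. a i * c i)"
    unfolding D_def by (simp add: sum_distrib_left sum_distrib_right algebra_simps sum_subtractf)
  have D2: "D = (\<Sum>i\<in>I. \<Sum>j\<in>I. a j * a i * v j * (c j - c i))"
    unfolding D_def by (rule sum.swap)
  have "2 * D = (\<Sum>i\<in>I. \<Sum>j\<in>I. a i * a j * ((c i - c j) * (v i - v j)))"
    unfolding mult_2 
    apply (subst (2) D2) unfolding D_def sum.distrib[symmetric]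
    by (intro sum.cong refl) (simp add: algebra_simps)
  also have "\<dots> \<ge> 0"
  proof (intro sum_nonneg)
    fix i j assume "i \<in> I" "j \<in> I"
    then show "a i * a j * ((c i - c j) * (v i - v j)) \<ge> 0"
      using assms(3)[of i] assms(3)[of j] assms(5)[of i j] by simp
  qed
  finally have "D \<ge> 0" by simp
  then show ?thesis using pa pc D1 by (simp add: divide_simps)
qed

lemma restrict_eq_iff: "\<rho> \<in> extensional I \<Longrightarrow> (restrict f I = \<rho>) = (\<forall>i\<in>I. f i = \<rho> i)"
  by (auto simp: fun_eq_iff extensional_def restrict_def)

theorem corollary1:
  fixes P :: "'w measure" and MX :: "'x measure"
    and F :: "('x \<times> bool \<times> bool) measure"
    and X :: "nat \<Rightarrow> 'w \<Rightarrow> 'x" and A Y :: "nat \<Rightarrow> 'w \<Rightarrow> bool"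
    and r :: "'x \<Rightarrow> real" and RR :: "real set" and n :: nat
    and \<epsilon>max \<gamma>max :: real
  assumes P: "prob_space P"
    and n: "n \<ge> 1"
    and RR: "finite RR" "RR \<subseteq> {0..1}" "\<And>x. r x \<in> RR"
    and r_meas: "r \<in> borel_measurable MX"
    and indep: "prob_space.indep_vars P
                  (\<lambda>_. MX \<Otimes>\<^sub>M count_space UNIV \<Otimes>\<^sub>M count_space UNIV)
                  (\<lambda>i \<omega>. (X i \<omega>, A i \<omega>, Y i \<omega>)) {1..n}"
    and ident: "\<And>i. i \<in> {1..n} \<Longrightarrow>
                  distr P (MX \<Otimes>\<^sub>M count_space UNIV \<Otimes>\<^sub>M count_space UNIV)
                    (\<lambda>\<omega>. (X i \<omega>, A i \<omega>, Y i \<omega>)) = F"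
    and posY: "measure F {t \<in> space F. snd (snd t)} > 0"
              "measure F {t \<in> space F. \<not> snd (snd t)} > 0"
    and posAY: "measure F {t \<in> space F. \<not> fst (snd t) \<and> snd (snd t)} > 0"
               "measure F {t \<in> space F. fst (snd t) \<and> snd (snd t)} > 0"
    and MLR: "\<And>\<rho> \<rho>'. \<rho> \<in> RR \<Longrightarrow> \<rho>' \<in> RR \<Longrightarrow> \<rho> > \<rho>' \<Longrightarrow>
                prob_R_given_Y F r \<rho> True * prob_R_given_Y F r \<rho>' False
                \<ge> prob_R_given_Y F r \<rho>' True * prob_R_given_Y F r \<rho> False"
    and \<epsilon>max: "\<epsilon>max \<ge> 0"
    and \<gamma>max: "\<gamma>max \<ge> 0"
  shows "(\<bar>fairness_gap P r X A Y n \<epsilon>max\<bar> \<le> \<gamma>max \<longrightarrow>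
            is_arg_max (accuracy P r X Y n)
              (\<lambda>\<epsilon>. 0 \<le> \<epsilon> \<and> \<epsilon> \<le> \<epsilon>max \<and> \<bar>fairness_gap P r X A Y n \<epsilon>\<bar> \<le> \<gamma>max) \<epsilon>max)
       \<and> (\<bar>fairness_gap P r X A Y n \<epsilon>max\<bar> > \<gamma>max \<longrightarrow>
            (\<exists>\<epsilon>s. (0 \<le> \<epsilon>s \<and> \<epsilon>s \<le> \<epsilon>max \<and> \<bar>fairness_gap P r X A Y n \<epsilon>s\<bar> = \<gamma>max)
               \<and> (\<forall>\<epsilon>. 0 \<le> \<epsilon> \<and> \<epsilon> \<le> \<epsilon>max \<and> \<bar>fairness_gap P r X A Y n \<epsilon>\<bar> = \<gamma>max \<longrightarrow> \<epsilon> \<le> \<epsilon>s)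
               \<and> is_arg_max (accuracy P r X Y n)
                   (\<lambda>\<epsilon>. 0 \<le> \<epsilon> \<and> \<epsilon> \<le> \<epsilon>max \<and> \<bar>fairness_gap P r X A Y n \<epsilon>\<bar> \<le> \<gamma>max) \<epsilon>s))"
proof -
  interpret prob_space P by (rule P)
  let ?M = "MX \<Otimes>\<^sub>M count_space (UNIV::bool set) \<Otimes>\<^sub>M count_space (UNIV::bool set)"
  let ?W = "\<lambda>i \<omega>. (X i \<omega>, A i \<omega>, Y i \<omega>)"
  have Wm: "?W i \<in> measurable P ?M" if "i \<in> {1..n}" for i
    using indep that unfolding indep_vars_def2 by auto
  have indsets: "indep_sets (\<lambda>i. {?W i -` B \<inter> space P | B. B \<in> sets ?M}) {1..n}"
    using indep unfolding indep_vars_def2 by auto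
  have spF: "space F = space ?M" using ident[of 1] n by (metis atLeastAtMost_iff order_refl space_distr)
  define fF where "fF \<rho> b = measure F {t\<in>space F. r (fst t) = \<rho> \<and> snd (snd t) = b}" for \<rho> b
  define E where "E \<rho> b = {t\<in>space ?M. r (fst t) = \<rho> \<and> snd (snd t) = b}" for \<rho> b
  have Esets: "E \<rho> b \<in> sets ?M" for \<rho> b
    unfolding E_def using r_meas by measurable
  have probE: "prob (?W i -` E \<rho> b \<inter> space P) = fF \<rho> b" if "i \<in> {1..n}" for i \<rho> b
  proof -
    have "fF \<rho> b = measure F (E \<rho> b)" unfolding fF_def E_def spF ..
    also have "\<dots> = measure (distr P ?M (?W i)) (E \<rho> b)" using ident[OF that] by simp
    also have "\<dots> = prob (?W i -` E \<rho> b \<inter> space P)" by (rule measure_distr[OF Wm[OF that] Esets])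
    finally show ?thesis by simp
  qed
  let ?PR = "PiE {1..n} (\<lambda>_. RR)"
  let ?PY = "PiE {1..n} (\<lambda>_. UNIV::bool set)"
  let ?V = "\<lambda>\<omega>. (restrict (\<lambda>i. r (X i \<omega>)) {1..n}, restrict (\<lambda>i. Y i \<omega>) {1..n})"
  have Vset: "{\<omega>\<in>space P. ?V \<omega> = (\<rho>, y)} = (\<Inter>i\<in>{1..n}. ?W i -` E (\<rho> i) (y i) \<inter> space P)"
    if "\<rho> \<in> ?PR" "y \<in> ?PY" for \<rho> y
  proof -
    have sp: "?W i \<omega> \<in> space ?M" if "i \<in> {1..n}" "\<omega> \<in> space P" for i \<omega>
      using measurable_space[OF Wm[OF that(1)] that(2)] .
    have ex: "\<rho> \<in> extensional {1..n}" "y \<in> extensional {1..n}" using that by (auto simp: PiE_iff)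
    show ?thesis
    proof (rule set_eqI)
      fix \<omega>
      have ne: "{1..n} \<noteq> {}" using n by simp
      show "\<omega> \<in> {\<omega>\<in>space P. ?V \<omega> = (\<rho>, y)} \<longleftrightarrow> \<omega> \<in> (\<Inter>i\<in>{1..n}. ?W i -` E (\<rho> i) (y i) \<inter> space P)"
        unfolding E_def using ne sp
        by (simp only: mem_Collect_eq prod.inject restrict_eq_iff[OF ex(1)] restrict_eq_iff[OF ex(2)]
            INT_iff Int_iff vimage_eq fst_conv snd_conv) blast
    qed
  qed
  have Vev: "{\<omega>\<in>space P. ?V \<omega> = (\<rho>, y)} \<in> events" if "\<rho> \<in> ?PR" "y \<in> ?PY" for \<rho> y
    unfolding Vset[OF that] using n
    by (intro sets.finite_INT) (auto intro!: measurable_sets[OF Wm Esets])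
  have Vprob: "prob {\<omega>\<in>space P. ?V \<omega> = (\<rho>, y)} = (\<Prod>i\<in>{1..n}. fF (\<rho> i) (y i))"
    if "\<rho> \<in> ?PR" "y \<in> ?PY" for \<rho> y
    unfolding Vset[OF that] using n
    by (subst indep_setsD[OF indsets]) (auto intro!: prod.cong probE Esets)
  define Zs where "Zs \<rho> \<epsilon> i = exp (\<epsilon> * \<rho> i / 2) / (\<Sum>j\<in>{1..n}. exp (\<epsilon> * \<rho> j / 2))" for \<rho> :: "nat \<Rightarrow> real" and \<epsilon> i
  define g where "g \<rho> = fF \<rho> True + fF \<rho> False" for \<rho>
  define q where "q \<rho> = fF \<rho> True / g \<rho>" for \<rho>
  have fF_nn: "fF \<rho> b \<ge> 0" for \<rho> b unfolding fF_def by simp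
  have g_nn: "g \<rho> \<ge> 0" for \<rho> unfolding g_def using fF_nn by (simp add: add_nonneg_nonneg)
  have fFq: "fF \<rho> True = q \<rho> * g \<rho>" for \<rho>
    using fF_nn[of \<rho> True] fF_nn[of \<rho> False] unfolding q_def g_def by (cases "fF \<rho> True + fF \<rho> False = 0") auto
  have finPR: "finite ?PR" using RR(1) by (simp add: finite_PiE)
  have finPY: "finite ?PY" by (simp add: finite_PiE)
  have acc: "accuracy P r X Y n \<epsilon> = (\<Sum>\<rho>\<in>?PR. (\<Prod>j\<in>{1..n}. g (\<rho> j)) * (\<Sum>i\<in>{1..n}. Zs \<rho> \<epsilon> i * q (\<rho> i)))" for \<epsilon>
  proof -
    define Hacc where "Hacc v = (\<Sum>i\<in>{1..n}. Zs (fst v) \<epsilon> i * (if snd v i then 1 else 0))" for v :: "(nat \<Rightarrow> real) \<times> (nat \<Rightarrow> bool)"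
    have "accuracy P r X Y n \<epsilon> = (\<integral>\<omega>. Hacc (?V \<omega>) \<partial>P)"
      unfolding accuracy_def Hacc_def Zs_def sel_prob_def
      by (intro Bochner_Integration.integral_cong refl sum.cong) auto
    also have "\<dots> = (\<Sum>v\<in>?PR \<times> ?PY. Hacc v * prob {\<omega>\<in>space P. ?V \<omega> = v})"
      by (rule finite_integral[OF P]) (use finPR finPY RR(3) Vev in auto)
    also have "\<dots> = (\<Sum>\<rho>\<in>?PR. \<Sum>y\<in>?PY. Hacc (\<rho>, y) * (\<Prod>i\<in>{1..n}. fF (\<rho> i) (y i)))"
    proof (subst sum.cartesian_product, rule sum.cong[OF refl])
      fix v assume "v \<in> ?PR \<times> ?PY"
      then obtain \<rho> y where v: "v = (\<rho>, y)" and \<rho>: "\<rho> \<in> ?PR" and y: "y \<in> ?PY" by blast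
      show "Hacc v * prob {\<omega>\<in>space P. ?V \<omega> = v} = (case v of (\<rho>, y) \<Rightarrow> Hacc (\<rho>, y) * (\<Prod>i\<in>{1..n}. fF (\<rho> i) (y i)))"
        unfolding v using Vprob[OF \<rho> y] by simp
    qed
    also have "\<dots> = (\<Sum>\<rho>\<in>?PR. (\<Prod>j\<in>{1..n}. g (\<rho> j)) * (\<Sum>i\<in>{1..n}. Zs \<rho> \<epsilon> i * q (\<rho> i)))"
    proof (intro sum.cong refl)
      fix \<rho> assume \<rho>: "\<rho> \<in> ?PR"
      have inner: "(\<Sum>y\<in>?PY. (if y i then 1 else 0) * (\<Prod>j\<in>{1..n}. fF (\<rho> j) (y j)))
            = (\<Prod>j\<in>{1..n}. g (\<rho> j)) * q (\<rho> i)" if i: "i \<in> {1..n}" for i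
      proof -
        have "(\<Sum>y\<in>?PY. (if y i then 1 else 0) * (\<Prod>j\<in>{1..n}. fF (\<rho> j) (y j)))
            = (\<Sum>y\<in>?PY. \<Prod>j\<in>{1..n}. fF (\<rho> j) (y j) * (if j = i then (if y j then 1 else 0) else 1))"
          using i by (intro sum.cong refl) (simp add: prod.distrib prod.delta)
        also have "\<dots> = (\<Prod>j\<in>{1..n}. \<Sum>b\<in>UNIV. fF (\<rho> j) b * (if j = i then (if b then 1 else 0) else 1))"
          by (rule prod_sum_PiE[symmetric]) auto
        also have "\<dots> = (\<Prod>j\<in>{1..n}. g (\<rho> j) * (if j = i then q (\<rho> j) else 1))"
        proof (intro prod.cong refl)
          fix j
          show "(\<Sum>b\<in>UNIV. fF (\<rho> j) b * (if j = i then (if b then 1 else 0) else 1)) = g (\<rho> j) * (if j = i then q (\<rho> j) else 1)"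
          proof (cases "j = i")
            case True then show ?thesis by (simp add: UNIV_bool fFq mult.commute)
          next
            case False then show ?thesis by (simp add: UNIV_bool g_def add.commute)
          qed
        qed
        also have "\<dots> = (\<Prod>j\<in>{1..n}. g (\<rho> j)) * q (\<rho> i)"
          using i by (simp add: prod.distrib prod.delta)
        finally show ?thesis .
      qed
      have "(\<Sum>y\<in>?PY. Hacc (\<rho>, y) * (\<Prod>i\<in>{1..n}. fF (\<rho> i) (y i)))
          = (\<Sum>i\<in>{1..n}. Zs \<rho> \<epsilon> i * (\<Sum>y\<in>?PY. (if y i then 1 else 0) * (\<Prod>j\<in>{1..n}. fF (\<rho> j) (y j))))"
        unfolding Hacc_def by (simp add: sum_distrib_left sum_distrib_right mult.assoc) (rule sum.swap)
      also have "\<dots> = (\<Sum>i\<in>{1..n}. Zs \<rho> \<epsilon> i * ((\<Prod>j\<in>{1..n}. g (\<rho> j)) * q (\<rho> i)))"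
      proof (rule sum.cong[OF refl])
        fix i assume i: "i \<in> {1..n}"
        show "Zs \<rho> \<epsilon> i * (\<Sum>y\<in>?PY. (if y i then 1 else 0) * (\<Prod>j\<in>{1..n}. fF (\<rho> j) (y j))) = Zs \<rho> \<epsilon> i * ((\<Prod>j\<in>{1..n}. g (\<rho> j)) * q (\<rho> i))"
          by (simp only: inner[OF i])
      qed
      also have "\<dots> = (\<Prod>j\<in>{1..n}. g (\<rho> j)) * (\<Sum>i\<in>{1..n}. Zs \<rho> \<epsilon> i * q (\<rho> i))"
        by (simp add: sum_distrib_left algebra_simps)
      finally show "(\<Sum>y\<in>?PY. Hacc (\<rho>, y) * (\<Prod>i\<in>{1..n}. fF (\<rho> i) (y i))) = \<dots>" .
    qed
    finally show ?thesis .
  qed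
  have qmono: "q \<rho>2 \<le> q \<rho>1" if "\<rho>1 \<in> RR" "\<rho>2 \<in> RR" "\<rho>1 > \<rho>2" "g \<rho>1 > 0" "g \<rho>2 > 0" for \<rho>1 \<rho>2
  proof -
    define pT where "pT = measure F {t \<in> space F. snd (snd t)}"
    define pF where "pF = measure F {t \<in> space F. \<not> snd (snd t)}"
    have pT: "pT > 0" and pF: "pF > 0" using posY unfolding pT_def pF_def by auto
    have "(fF \<rho>1 True / pT) * (fF \<rho>2 False / pF) \<ge> (fF \<rho>2 True / pT) * (fF \<rho>1 False / pF)"
      using MLR[OF that(1-3)] unfolding prob_R_given_Y_def fF_def pT_def pF_def by simp
    then have key: "fF \<rho>1 True * fF \<rho>2 False \<ge> fF \<rho>2 True * fF \<rho>1 False"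
      using pT pF by (simp add: divide_simps)
    show ?thesis unfolding q_def using that(4,5) key
      by (simp add: divide_simps g_def algebra_simps)
  qed
  have accmono: "accuracy P r X Y n \<epsilon> \<le> accuracy P r X Y n \<epsilon>'" if le: "\<epsilon> \<le> \<epsilon>'" for \<epsilon> \<epsilon>'
    unfolding acc
  proof (intro sum_mono)
    fix \<rho> assume \<rho>: "\<rho> \<in> ?PR"
    show "(\<Prod>j\<in>{1..n}. g (\<rho> j)) * (\<Sum>i\<in>{1..n}. Zs \<rho> \<epsilon> i * q (\<rho> i))
        \<le> (\<Prod>j\<in>{1..n}. g (\<rho> j)) * (\<Sum>i\<in>{1..n}. Zs \<rho> \<epsilon>' i * q (\<rho> i))"
    proof (cases "\<exists>j\<in>{1..n}. g (\<rho> j) = 0")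
      case True
      then have "(\<Prod>j\<in>{1..n}. g (\<rho> j)) = 0" by (metis finite_atLeastAtMost prod_zero_iff)
      then show ?thesis by (simp only: mult_zero_left order.refl)
    next
      case False
      then have gpos: "g (\<rho> j) > 0" if "j \<in> {1..n}" for j using g_nn[of "\<rho> j"] that by force
      define a where "a i = exp (\<epsilon> * \<rho> i / 2)" for i
      define c where "c i = exp ((\<epsilon>' - \<epsilon>) * \<rho> i / 2)" for i
      have ac: "exp (\<epsilon>' * \<rho> i / 2) = a i * c i" for i
        unfolding a_def c_def by (simp add: exp_add[symmetric] algebra_simps add_divide_distrib[symmetric])
      have e1: "(\<Sum>i\<in>{1..n}. Zs \<rho> \<epsilon> i * q (\<rho> i)) = (\<Sum>i\<in>{1..n}. a i * q (\<rho> i)) / (\<Sum>i\<in>{1..n}. a i)"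
        unfolding Zs_def a_def by (simp add: sum_divide_distrib)
      have e2: "(\<Sum>i\<in>{1..n}. Zs \<rho> \<epsilon>' i * q (\<rho> i)) = (\<Sum>i\<in>{1..n}. a i * c i * q (\<rho> i)) / (\<Sum>i\<in>{1..n}. a i * c i)"
        unfolding Zs_def ac by (simp add: sum_divide_distrib)
      have "(\<Sum>i\<in>{1..n}. a i * q (\<rho> i)) / (\<Sum>i\<in>{1..n}. a i) \<le> (\<Sum>i\<in>{1..n}. a i * c i * q (\<rho> i)) / (\<Sum>i\<in>{1..n}. a i * c i)"
      proof (rule cheb)
        show "{1..n} \<noteq> {}" using n by simp
        fix i j assume i: "i \<in> {1..n}" and j: "j \<in> {1..n}"
        have ri: "\<rho> i \<in> RR" and rj: "\<rho> j \<in> RR" using \<rho> i j by auto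
        consider "\<rho> i > \<rho> j" | "\<rho> i = \<rho> j" | "\<rho> i < \<rho> j" by linarith
        then show "(c i - c j) * (q (\<rho> i) - q (\<rho> j)) \<ge> 0"
        proof cases
          case 1
          have "c i \<ge> c j" unfolding c_def using le 1 by (simp add: mult_left_mono divide_right_mono)
          moreover have "q (\<rho> i) \<ge> q (\<rho> j)" using qmono[OF ri rj 1 gpos[OF i] gpos[OF j]] .
          ultimately show ?thesis by simp
        next
          case 2 then show ?thesis by simp
        next
          case 3
          have "c i \<le> c j" unfolding c_def using le 3 by (simp add: mult_left_mono divide_right_mono)
          moreover have "q (\<rho> i) \<le> q (\<rho> j)" using qmono[OF rj ri 3 gpos[OF j] gpos[OF i]] .
          ultimately show ?thesis by (simp add: mult_nonpos_nonpos)
        qed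
      qed (auto simp: a_def c_def)
      then show ?thesis unfolding e1 e2
        by (intro mult_left_mono) (auto intro: prod_nonneg g_nn)
    qed
  qed
  have n1: "1 \<in> {1..n}" using n by simp
  have Wm1: "?W 1 \<in> measurable P ?M" using Wm[OF n1] .
  have "(\<lambda>\<omega>. fst (snd (?W 1 \<omega>))) \<in> measurable P (count_space UNIV)"
    by (rule measurable_compose[OF Wm1]) measurable
  then have A1m[measurable]: "A 1 \<in> measurable P (count_space UNIV)" by simp
  have "(\<lambda>\<omega>. snd (snd (?W 1 \<omega>))) \<in> measurable P (count_space UNIV)"
    by (rule measurable_compose[OF Wm1]) measurable
  then have Y1m[measurable]: "Y 1 \<in> measurable P (count_space UNIV)" by simp
  define Er where "Er \<rho> = {t\<in>space ?M. r (fst t) = \<rho>}" for \<rho>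
  have Ersets: "Er \<rho> \<in> sets ?M" for \<rho>
    unfolding Er_def using r_meas by measurable
  have Zpos: "(\<Sum>j\<in>{1..n}. exp (\<epsilon> * \<rho> j / 2)) > 0" for \<epsilon> and \<rho> :: "nat \<Rightarrow> real"
    using n by (intro sum_pos) auto
  have Zs_cont: "continuous_on UNIV (\<lambda>\<epsilon>. Zs \<rho> \<epsilon> i)" for \<rho> i
    unfolding Zs_def using Zpos[of _ \<rho>] by (intro continuous_intros) (auto simp: less_imp_neq[symmetric])
  have Icont: "continuous_on UNIV (\<lambda>\<epsilon>. \<integral>\<omega>. sel_prob r X n \<epsilon> 1 \<omega> * indicator {\<omega>\<in>space P. B \<omega>} \<omega> \<partial>P)"
    if Bm: "\<And>b. {\<omega>\<in>space P. B \<omega> = b} \<in> events" for B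
  proof -
    let ?V' = "\<lambda>\<omega>. (restrict (\<lambda>i. r (X i \<omega>)) {1..n}, B \<omega>)"
    have ev: "{\<omega>\<in>space P. ?V' \<omega> = v} \<in> events" if v: "v \<in> ?PR \<times> UNIV" for v
    proof -
      obtain \<rho> b where vv: "v = (\<rho>, b)" and \<rho>: "\<rho> \<in> ?PR" using v by auto
      have ex: "\<rho> \<in> extensional {1..n}" using \<rho> by (auto simp: PiE_iff)
      have sp: "?W i \<omega> \<in> space ?M" if "i \<in> {1..n}" "\<omega> \<in> space P" for i \<omega>
        using measurable_space[OF Wm[OF that(1)] that(2)] .
      have "{\<omega>\<in>space P. ?V' \<omega> = v} = (\<Inter>i\<in>{1..n}. ?W i -` Er (\<rho> i) \<inter> space P) \<inter> {\<omega>\<in>space P. B \<omega> = b}"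
      proof (rule set_eqI)
        fix \<omega>
        have ne: "{1..n} \<noteq> {}" using n by simp
        show "\<omega> \<in> {\<omega>\<in>space P. ?V' \<omega> = v} \<longleftrightarrow> \<omega> \<in> (\<Inter>i\<in>{1..n}. ?W i -` Er (\<rho> i) \<inter> space P) \<inter> {\<omega>\<in>space P. B \<omega> = b}"
          unfolding Er_def vv using ne sp
          by (simp only: mem_Collect_eq prod.inject restrict_eq_iff[OF ex]
              INT_iff Int_iff vimage_eq fst_conv snd_conv) blast
      qed
      also have "\<dots> \<in> events"
      proof (rule sets.Int)
        show "(\<Inter>i\<in>{1..n}. ?W i -` Er (\<rho> i) \<inter> space P) \<in> events" using n
          by (intro sets.finite_INT) (auto intro!: measurable_sets[OF Wm Ersets])
      qed (rule Bm)
      finally show ?thesis .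
    qed
    have eq: "(\<integral>\<omega>. sel_prob r X n \<epsilon> 1 \<omega> * indicator {\<omega>\<in>space P. B \<omega>} \<omega> \<partial>P)
       = (\<Sum>v\<in>?PR \<times> UNIV. (Zs (fst v) \<epsilon> 1 * (if snd v then 1 else 0)) * prob {\<omega>\<in>space P. ?V' \<omega> = v})" for \<epsilon>
    proof -
      have "(\<integral>\<omega>. sel_prob r X n \<epsilon> 1 \<omega> * indicator {\<omega>\<in>space P. B \<omega>} \<omega> \<partial>P)
          = (\<integral>\<omega>. (\<lambda>v. Zs (fst v) \<epsilon> 1 * (if snd v then 1 else 0)) (?V' \<omega>) \<partial>P)"
        using n1 unfolding sel_prob_def Zs_def
        by (intro Bochner_Integration.integral_cong refl) (auto simp: indicator_def)
      also have "\<dots> = (\<Sum>v\<in>?PR \<times> UNIV. (Zs (fst v) \<epsilon> 1 * (if snd v then 1 else 0)) * prob {\<omega>\<in>space P. ?V' \<omega> = v})"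
        by (rule finite_integral[OF P]) (use finPR RR(3) ev in auto)
      finally show ?thesis .
    qed
    show ?thesis unfolding eq by (intro continuous_intros Zs_cont)
  qed
  have B0m: "\<And>b. {\<omega>\<in>space P. (\<not> A 1 \<omega> \<and> Y 1 \<omega>) = b} \<in> events" by measurable
  have B1m: "\<And>b. {\<omega>\<in>space P. (A 1 \<omega> \<and> Y 1 \<omega>) = b} \<in> events" by measurable
  have B0m': "{\<omega>\<in>space P. (\<not> A 1 \<omega> \<and> Y 1 \<omega>) = b} = {\<omega>\<in>space P. \<not> A 1 \<omega> \<and> Y 1 \<omega>}" if "b" for b
    using that by simp
  have measF: "prob {\<omega>\<in>space P. Q (A 1 \<omega>) (Y 1 \<omega>)} = measure F {t\<in>space F. Q (fst (snd t)) (snd (snd t))}" for Q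
  proof -
    have S: "{t\<in>space ?M. Q (fst (snd t)) (snd (snd t))} \<in> sets ?M" by measurable
    have "measure F {t\<in>space F. Q (fst (snd t)) (snd (snd t))} = measure (distr P ?M (?W 1)) {t\<in>space ?M. Q (fst (snd t)) (snd (snd t))}"
      using ident[OF n1] spF by simp
    also have "\<dots> = prob (?W 1 -` {t\<in>space ?M. Q (fst (snd t)) (snd (snd t))} \<inter> space P)"
      by (rule measure_distr[OF Wm1 S])
    also have "?W 1 -` {t\<in>space ?M. Q (fst (snd t)) (snd (snd t))} \<inter> space P = {\<omega>\<in>space P. Q (A 1 \<omega>) (Y 1 \<omega>)}"
      using measurable_space[OF Wm1] by auto
    finally show ?thesis by simp
  qed
  have p0: "prob {\<omega>\<in>space P. \<not> A 1 \<omega> \<and> Y 1 \<omega>} > 0"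
    using measF[of "\<lambda>a y. \<not> a \<and> y"] posAY(1) by simp
  have p1: "prob {\<omega>\<in>space P. A 1 \<omega> \<and> Y 1 \<omega>} > 0"
    using measF[of "\<lambda>a y. a \<and> y"] posAY(2) by simp
  have B0c: "continuous_on UNIV (\<lambda>\<epsilon>. \<integral>\<omega>. sel_prob r X n \<epsilon> 1 \<omega> * indicator {\<omega>\<in>space P. \<not> A 1 \<omega> \<and> Y 1 \<omega>} \<omega> \<partial>P)"
    by (rule Icont) (rule B0m)
  have B1c: "continuous_on UNIV (\<lambda>\<epsilon>. \<integral>\<omega>. sel_prob r X n \<epsilon> 1 \<omega> * indicator {\<omega>\<in>space P. A 1 \<omega> \<and> Y 1 \<omega>} \<omega> \<partial>P)"
    by (rule Icont) (rule B1m)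
  have gcont: "continuous_on UNIV (\<lambda>\<epsilon>. \<bar>fairness_gap P r X A Y n \<epsilon>\<bar>)"
    unfolding fairness_gap_def cond_exp_def
    using p0 p1 by (intro continuous_on_rabs continuous_on_diff continuous_on_divide B0c B1c continuous_on_const) auto
  have sel0: "sel_prob r X n 0 1 \<omega> = 1 / real n" for \<omega>
    unfolding sel_prob_def by simp
  have ce0: "cond_exp P (sel_prob r X n 0 1) B = 1 / real n" if "prob {\<omega>\<in>space P. B \<omega>} > 0" for B
    unfolding cond_exp_def sel0 using that by (simp add: Int_absorb2)
  have gap0: "fairness_gap P r X A Y n 0 = 0"
    unfolding fairness_gap_def using ce0[OF p0] ce0[OF p1] by simp
  let ?G = "\<lambda>\<epsilon>. \<bar>fairness_gap P r X A Y n \<epsilon>\<bar>"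
  let ?acc = "accuracy P r X Y n"
  let ?feas = "\<lambda>\<epsilon>. 0 \<le> \<epsilon> \<and> \<epsilon> \<le> \<epsilon>max \<and> \<bar>fairness_gap P r X A Y n \<epsilon>\<bar> \<le> \<gamma>max"
  have argmax: "is_arg_max ?acc ?feas e" if "?feas e" "\<And>\<epsilon>. ?feas \<epsilon> \<Longrightarrow> \<epsilon> \<le> e" for e
    unfolding is_arg_max_def using that accmono by (meson not_le)
  show ?thesis
  proof (intro conjI impI)
    assume "?G \<epsilon>max \<le> \<gamma>max"
    then show "is_arg_max ?acc ?feas \<epsilon>max" using \<epsilon>max by (intro argmax) auto
  next
    assume big: "?G \<epsilon>max > \<gamma>max"
    define K where "K = {0..\<epsilon>max} \<inter> ?G -` {\<gamma>max}"
    have cK: "compact K" unfolding K_def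
      by (intro compact_Int_closed compact_Icc closed_vimage gcont) simp
    have neK: "K \<noteq> {}"
    proof -
      have "\<exists>x. 0 \<le> x \<and> x \<le> \<epsilon>max \<and> ?G x = \<gamma>max"
        using gap0 \<gamma>max big \<epsilon>max by (intro IVT' continuous_on_subset[OF gcont]) auto
      then show ?thesis unfolding K_def by auto
    qed
    obtain es where es: "es \<in> K" and esmax0: "\<forall>t\<in>K. t \<le> es"
      using compact_attains_sup[OF cK neK] by (elim bexE)
    have esmax: "t \<le> es" if "t \<in> K" for t using esmax0 that by (rule bspec)
    have esK: "0 \<le> es \<and> es \<le> \<epsilon>max \<and> ?G es = \<gamma>max" using es unfolding K_def by auto
    have below: "\<epsilon> \<le> es" if f: "?feas \<epsilon>" for \<epsilon>
    proof (rule ccontr)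
      assume "\<not> \<epsilon> \<le> es"
      have "\<exists>x. \<epsilon> \<le> x \<and> x \<le> \<epsilon>max \<and> ?G x = \<gamma>max"
        using f big by (intro IVT' continuous_on_subset[OF gcont]) auto
      then obtain x where "\<epsilon> \<le> x" "x \<le> \<epsilon>max" "?G x = \<gamma>max" by blast
      then have "x \<in> K" using f unfolding K_def by auto
      then have "x \<le> es" by (rule esmax)
      with \<open>\<epsilon> \<le> x\<close> \<open>\<not> \<epsilon> \<le> es\<close> show False by simp
    qed
    show "\<exists>\<epsilon>s. (0 \<le> \<epsilon>s \<and> \<epsilon>s \<le> \<epsilon>max \<and> ?G \<epsilon>s = \<gamma>max)
               \<and> (\<forall>\<epsilon>. 0 \<le> \<epsilon> \<and> \<epsilon> \<le> \<epsilon>max \<and> ?G \<epsilon> = \<gamma>max \<longrightarrow> \<epsilon> \<le> \<epsilon>s)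
               \<and> is_arg_max ?acc ?feas \<epsilon>s"
    proof (intro exI conjI allI impI)
      show "0 \<le> es" "es \<le> \<epsilon>max" "?G es = \<gamma>max" using esK by auto
      show "\<epsilon> \<le> es" if "0 \<le> \<epsilon> \<and> \<epsilon> \<le> \<epsilon>max \<and> ?G \<epsilon> = \<gamma>max" for \<epsilon>
        using that by (intro esmax) (auto simp: K_def)
      show "is_arg_max ?acc ?feas es" using esK \<gamma>max by (intro argmax below) auto
    qed
  qed
qed

end
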